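(* Let $\mathfrak{g}$ be the real Lie algebra whose dual has a basis $e^1,\dots,e^6$ with $de^1=de^2=de^3=de^4=0$, $de^5=e^1\wedge e^3+e^4\wedge e^2$, $de^6=e^1\wedge e^4+e^2\wedge e^3$. Let $\omega^1=e^1+ie^2$, $\omega^2=e^3+ie^4$, $\omega^3=e^5+ie^6$, and let $J_1$ be the complex structure on $\mathfrak{g}$ whose space of $(1,0)$-forms is $\langle\omega^1,\overline{\omega^2},\overline{\omega^3}\rangle$. Then the element $\theta\in\mathrm{Hom}(\Lambda^{1,0},\Lambda^{0,1})$ defined by $\theta(\omega^1)=\omega^3$, $\theta(\overline{\omega^2})=0$, $\theta(\overline{\omega^3})=0$ satisfies $\bar\partial\theta=0$, but $\theta$ is not tangent to $\mathcal{C}(\mathfrak{g})$ at $J_1$ (there is no differentiable path in $\mathcal{C}(\mathfrak{g})$ through $J_1$ with tangent vector $\theta$).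
   Context: $\mathcal{C}(\mathfrak{g})$ is the set of complex structures on $\mathfrak{g}$, i.e. linear $J$ with $J^2=-1$ and $[JX,JY]=[X,Y]+J[JX,Y]+J[X,JY]$; $d\alpha(X,Y)=-\alpha([X,Y])$ extended complex-linearly. Relative to $J_1$, $\Lambda^{1,0}=\langle\omega^1,\overline{\omega^2},\overline{\omega^3}\rangle$ and $\Lambda^{0,1}=\overline{\Lambda^{1,0}}$. Each complex structure $J$ is identified with its space of $(1,0)$-forms, a point of the Grassmannian of complex $3$-planes in $\mathfrak{g}^*_{\mathbb{C}}$; tangent vectors at $J$ are identified with $\mathrm{Hom}(\Lambda^{1,0},\Lambda^{0,1})$ via: if $\{\eta^1,\eta^2,\eta^3\}$ is a basis of $\Lambda^{1,0}$ and $\tau^i(t)\in\Lambda^{1,0}$ with $\tau^i(0)=0$, $\dot\tau^i(0)=\sigma^i$, the path $\langle\eta^i+\overline{\tau^i(t)}\rangle$ has tangent vector $\eta^i\mapsto\overline{\sigma^i}$. For $\theta\in\mathrm{Hom}(\Lambda^{1,0},\Lambda^{0,1})$, $(\bar\partial\theta)(\eta)=\bar\partial(\theta\eta)-\theta(\bar\partial\eta)$, where $\bar\partial$ of a $(1,0)$-form is the $(1,1)$-component of its $d$, $\bar\partial$ of a $(0,1)$-form is the $(0,2)$-component of its $d$, and $\theta(\alpha\wedge\bar\beta)=\theta(\alpha)\wedge\bar\beta$ for $\alpha\in\Lambda^{1,0},\bar\beta\in\Lambda^{0,1}$. *)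

theory Defs
  imports "HOL-Analysis.Analysis"
begin

text \<open>The Lie algebra g = R^6 with basis e_1..e_6 (indices 1..6 of the numeral type 6).
  Vectors of g (and of its complexification g_C) are coefficient vectors w.r.t. e_1..e_6;
  (complex) 1-forms are coefficient vectors w.r.t. the dual basis e^1..e^6.\<close>

definition ev :: "'a::comm_ring_1 ^ 6 \<Rightarrow> 'a ^ 6 \<Rightarrow> 'a" where
  "ev \<alpha> X = (\<Sum>i\<in>UNIV. \<alpha> $ i * X $ i)"

definition wdg :: "6 \<Rightarrow> 6 \<Rightarrow> 'a::comm_ring_1 ^ 6 \<Rightarrow> 'a ^ 6 \<Rightarrow> 'a" where
  "wdg i j X Y = X $ i * Y $ j - X $ j * Y $ i"

definition de :: "6 \<Rightarrow> 'a::comm_ring_1 ^ 6 \<Rightarrow> 'a ^ 6 \<Rightarrow> 'a" where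
  "de k X Y = (if k = 5 then wdg 1 3 X Y + wdg 4 2 X Y
               else if k = 6 then wdg 1 4 X Y + wdg 2 3 X Y else 0)"

text \<open>The bracket determined by d alpha (X,Y) = - alpha([X,Y]) (complex-bilinear on g_C).\<close>
definition brk :: "'a::comm_ring_1 ^ 6 \<Rightarrow> 'a ^ 6 \<Rightarrow> 'a ^ 6" where
  "brk X Y = (\<chi> k. - de k X Y)"

definition d1 :: "complex ^ 6 \<Rightarrow> complex ^ 6 \<Rightarrow> complex ^ 6 \<Rightarrow> complex" where
  "d1 \<alpha> X Y = - ev \<alpha> (brk X Y)"

definition cstructs :: "(real ^ 6 ^ 6) set" where
  "cstructs = {J. J ** J = - mat 1 \<and>
     (\<forall>X Y. brk (J *v X) (J *v Y) = brk X Y + J *v brk (J *v X) Y + J *v brk X (J *v Y))}"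

definition cplx :: "real ^ 6 \<Rightarrow> complex ^ 6" where
  "cplx X = (\<chi> i. complex_of_real (X $ i))"

definition cvec :: "complex ^ 6 \<Rightarrow> complex ^ 6" where
  "cvec v = (\<chi> i. cnj (v $ i))"

definition L10 :: "real ^ 6 ^ 6 \<Rightarrow> (complex ^ 6) set" where
  "L10 J = {\<alpha>. \<forall>X. ev \<alpha> (cplx (J *v X)) = \<i> * ev \<alpha> (cplx X)}"

definition cspan3 :: "complex ^ 6 \<Rightarrow> complex ^ 6 \<Rightarrow> complex ^ 6 \<Rightarrow> (complex ^ 6) set" where
  "cspan3 u v w = {a *s u + b *s v + c *s w | a b c. True}"

definition om1 :: "complex ^ 6" where "om1 = (\<chi> i. if i = 1 then 1 else if i = 2 then \<i> else 0)"
definition om2 :: "complex ^ 6" where "om2 = (\<chi> i. if i = 3 then 1 else if i = 4 then \<i> else 0)"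
definition om3 :: "complex ^ 6" where "om3 = (\<chi> i. if i = 5 then 1 else if i = 6 then \<i> else 0)"

definition JC :: "real ^ 6 ^ 6 \<Rightarrow> complex ^ 6 \<Rightarrow> complex ^ 6" where
  "JC J X = (\<chi> i. \<Sum>j\<in>UNIV. complex_of_real (J $ i $ j) * X $ j)"
definition P10 :: "real ^ 6 ^ 6 \<Rightarrow> complex ^ 6 \<Rightarrow> complex ^ 6" where
  "P10 J X = (1/2) *s (X - \<i> *s JC J X)"
definition P01 :: "real ^ 6 ^ 6 \<Rightarrow> complex ^ 6 \<Rightarrow> complex ^ 6" where
  "P01 J X = (1/2) *s (X + \<i> *s JC J X)"

definition comp02 :: "real ^ 6 ^ 6 \<Rightarrow> (complex^6 \<Rightarrow> complex^6 \<Rightarrow> complex) \<Rightarrow> complex^6 \<Rightarrow> complex^6 \<Rightarrow> complex" where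
  "comp02 J \<Omega> X Y = \<Omega> (P01 J X) (P01 J Y)"
definition comp11 :: "real ^ 6 ^ 6 \<Rightarrow> (complex^6 \<Rightarrow> complex^6 \<Rightarrow> complex) \<Rightarrow> complex^6 \<Rightarrow> complex^6 \<Rightarrow> complex" where
  "comp11 J \<Omega> X Y = \<Omega> (P10 J X) (P01 J Y) + \<Omega> (P01 J X) (P10 J Y)"

text \<open>theta is encoded as a complex matrix Th acting on 1-forms (alpha |-> Th *v alpha),
  equal to theta on Lambda^{1,0} and zero on Lambda^{0,1}.  Its action on 2-forms
  (used on (1,1)-forms) is the derivation extension; on (1,1)-forms it satisfies
  theta(alpha wedge conj beta) = theta(alpha) wedge conj beta.\<close>
definition theta2 :: "complex ^ 6 ^ 6 \<Rightarrow> (complex^6 \<Rightarrow> complex^6 \<Rightarrow> complex) \<Rightarrow> complex^6 \<Rightarrow> complex^6 \<Rightarrow> complex" where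
  "theta2 Th \<Omega> X Y = \<Omega> (transpose Th *v X) Y + \<Omega> X (transpose Th *v Y)"

definition dbar_theta :: "real ^ 6 ^ 6 \<Rightarrow> complex ^ 6 ^ 6 \<Rightarrow> complex ^ 6 \<Rightarrow> complex^6 \<Rightarrow> complex^6 \<Rightarrow> complex" where
  "dbar_theta J Th \<eta> X Y = comp02 J (d1 (Th *v \<eta>)) X Y - theta2 Th (comp11 J (d1 \<eta>)) X Y"

text \<open>theta is tangent to C(g) at J (whose (1,0)-forms have basis eta1, eta2, eta3):
  there is a differentiable path t |-> <eta_i + conj(tau_i(t))> in C(g), tau_i(t) in Lambda^{1,0},
  tau_i(0) = 0, with tangent vector eta_i |-> conj(tau_i'(0)) equal to theta.\<close>
definition tangent_at :: "real ^ 6 ^ 6 \<Rightarrow> complex ^ 6 \<Rightarrow> complex ^ 6 \<Rightarrow> complex ^ 6 \<Rightarrow> complex ^ 6 ^ 6 \<Rightarrow> bool" where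
  "tangent_at J \<eta>1 \<eta>2 \<eta>3 Th \<longleftrightarrow>
    (\<exists>\<epsilon>>0. \<exists>\<tau>1 \<tau>2 \<tau>3 :: real \<Rightarrow> complex ^ 6. \<exists>\<sigma>1 \<sigma>2 \<sigma>3.
       (\<forall>t\<in>{-\<epsilon><..<\<epsilon>}. \<tau>1 t \<in> L10 J \<and> \<tau>2 t \<in> L10 J \<and> \<tau>3 t \<in> L10 J) \<and>
       \<tau>1 0 = 0 \<and> \<tau>2 0 = 0 \<and> \<tau>3 0 = 0 \<and>
       (\<forall>t\<in>{-\<epsilon><..<\<epsilon>}. \<tau>1 differentiable (at t) \<and> \<tau>2 differentiable (at t) \<and> \<tau>3 differentiable (at t)) \<and>
       (\<tau>1 has_vector_derivative \<sigma>1) (at 0) \<and> (\<tau>2 has_vector_derivative \<sigma>2) (at 0) \<and>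
       (\<tau>3 has_vector_derivative \<sigma>3) (at 0) \<and>
       cvec \<sigma>1 = Th *v \<eta>1 \<and> cvec \<sigma>2 = Th *v \<eta>2 \<and> cvec \<sigma>3 = Th *v \<eta>3 \<and>
       (\<forall>t\<in>{-\<epsilon><..<\<epsilon>}. \<exists>J'\<in>cstructs.
          L10 J' = cspan3 (\<eta>1 + cvec (\<tau>1 t)) (\<eta>2 + cvec (\<tau>2 t)) (\<eta>3 + cvec (\<tau>3 t))))"

end

theory Submission
  imports Defs
begin


lemma card6: "card {1,2,3,4,5,(6::6)} = card (UNIV::6 set)" by simp
lemma UNIV6: "(UNIV::6 set) = {1,2,3,4,5,6}"
    using card_subset_eq[OF finite_class.finite_UNIV subset_UNIV card6] by (rule sym)
lemma sum6: "(\<Sum>i\<in>(UNIV::6 set). f i) = f 1 + f 2 + f 3 + f 4 + f 5 + f 6"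
  unfolding UNIV6 
  apply (subst sum.insert, simp, simp)+
  by (simp add: add.assoc)
lemma all6: "(\<forall>i::6. P i) = (P 1 \<and> P 2 \<and> P 3 \<and> P 4 \<and> P 5 \<and> P 6)"
proof -
  have "(\<forall>i::6. P i) = (\<forall>i\<in>UNIV. P i)" by simp
  also have "\<dots> = (P 1 \<and> P 2 \<and> P 3 \<and> P 4 \<and> P 5 \<and> P 6)" unfolding UNIV6 by simp
  finally show ?thesis .
qed

definition Jt :: "real ^ 6 ^ 6 \<Rightarrow> complex ^ 6 \<Rightarrow> complex ^ 6" where
  "Jt J \<alpha> = (\<chi> j. \<Sum>i\<in>UNIV. \<alpha> $ i * complex_of_real (J $ i $ j))"

lemma ev_add_l: "ev (\<alpha> + \<beta>) X = ev \<alpha> X + ev \<beta> X"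
  by (simp add: ev_def sum.distrib algebra_simps)
lemma ev_add_r: "ev \<alpha> (X + Y) = ev \<alpha> X + ev \<alpha> Y"
  by (simp add: ev_def sum.distrib algebra_simps)
lemma ev_diff_l: "ev (\<alpha> - \<beta>) X = ev \<alpha> X - ev \<beta> X"
  by (simp add: ev_def sum_subtractf algebra_simps)
lemma ev_diff_r: "ev \<alpha> (X - Y) = ev \<alpha> X - ev \<alpha> Y"
  by (simp add: ev_def sum_subtractf algebra_simps)
lemma ev_smult_l: "ev (c *s \<alpha>) X = c * ev \<alpha> X"
  by (simp add: ev_def sum_distrib_left algebra_simps)
lemma ev_smult_r: "ev \<alpha> (c *s X) = c * ev \<alpha> X"
  by (simp add: ev_def sum_distrib_left algebra_simps)
lemmas ev_lin = ev_add_l ev_add_r ev_diff_l ev_diff_r ev_smult_l ev_smult_r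

lemma ev_JC: "ev \<alpha> (JC J X) = ev (Jt J \<alpha>) X"
proof -
  have "ev \<alpha> (JC J X) = (\<Sum>i\<in>UNIV. \<Sum>j\<in>UNIV. \<alpha> $ i * complex_of_real (J $ i $ j) * X $ j)"
    by (simp add: ev_def JC_def sum_distrib_left mult.assoc)
  also have "\<dots> = (\<Sum>j\<in>UNIV. \<Sum>i\<in>UNIV. \<alpha> $ i * complex_of_real (J $ i $ j) * X $ j)"
    by (rule sum.swap)
  also have "\<dots> = ev (Jt J \<alpha>) X"
    by (simp add: ev_def Jt_def sum_distrib_right)
  finally show ?thesis .
qed

lemma cplx_mv: "cplx (J *v X) = JC J (cplx X)"
  by (simp add: vec_eq_iff cplx_def JC_def matrix_vector_mult_def)

lemma ev_axis: "ev \<beta> (cplx (axis j 1)) = \<beta> $ j"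
  by (simp add: ev_def cplx_def axis_def if_distrib sum.delta cong: if_cong)
lemma ev_axis2: "ev (axis j 1) W = W $ j"
proof -
  have "(\<Sum>i\<in>UNIV. axis j 1 $ i * W $ i) = (\<Sum>i\<in>UNIV. if i = j then W $ j else 0)"
    by (rule sum.cong) (auto simp: axis_def)
  then show ?thesis by (simp add: ev_def)
qed

lemma L10_iff: "\<alpha> \<in> L10 J \<longleftrightarrow> Jt J \<alpha> = \<i> *s \<alpha>"
proof
  assume "\<alpha> \<in> L10 J"
  then have h: "\<And>X. ev \<alpha> (cplx (J *v X)) = \<i> * ev \<alpha> (cplx X)" by (simp add: L10_def)
  show "Jt J \<alpha> = \<i> *s \<alpha>"
  proof (subst vec_eq_iff, intro allI)
    fix j
    have "(Jt J \<alpha>) $ j = ev (Jt J \<alpha>) (cplx (axis j 1))" by (simp add: ev_axis)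
    also have "\<dots> = \<i> * ev \<alpha> (cplx (axis j 1))" using h[of "axis j 1"] by (simp add: cplx_mv ev_JC)
    finally show "(Jt J \<alpha>) $ j = (\<i> *s \<alpha>) $ j" by (simp add: ev_axis)
  qed
next
  assume "Jt J \<alpha> = \<i> *s \<alpha>"
  then show "\<alpha> \<in> L10 J" by (simp add: L10_def cplx_mv ev_JC ev_smult_l)
qed

lemma Jt_cvec: "Jt J (cvec \<alpha>) = cvec (Jt J \<alpha>)"
  by (simp add: vec_eq_iff Jt_def cvec_def)
lemma cvec_cvec: "cvec (cvec \<alpha>) = \<alpha>"
  by (simp add: vec_eq_iff cvec_def)
lemma cvec_smult: "cvec (c *s \<alpha>) = cnj c *s cvec \<alpha>"
  by (simp add: vec_eq_iff cvec_def)
lemma Jt_add: "Jt J (\<alpha> + \<beta>) = Jt J \<alpha> + Jt J \<beta>"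
  by (simp add: vec_eq_iff Jt_def sum.distrib algebra_simps)
lemma Jt_diff: "Jt J (\<alpha> - \<beta>) = Jt J \<alpha> - Jt J \<beta>"
  by (simp add: vec_eq_iff Jt_def sum_subtractf algebra_simps)
lemma Jt_smult: "Jt J (c *s \<alpha>) = c *s Jt J \<alpha>"
  by (simp add: vec_eq_iff Jt_def sum_distrib_left algebra_simps)


lemma Jt_Jt: assumes "J ** J = - mat 1" shows "Jt J (Jt J \<alpha>) = - \<alpha>"
proof (subst vec_eq_iff, intro allI)
  fix k
  have e: "(\<Sum>j\<in>UNIV. J $ i $ j * J $ j $ k) = (if i = k then -1 else 0)" for i
  proof -
    have "(J ** J) $ i $ k = (- mat 1 :: real^6^6) $ i $ k" using assms by simp
    then show ?thesis by (simp add: matrix_matrix_mult_def mat_def)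
  qed
  have "(Jt J (Jt J \<alpha>)) $ k = (\<Sum>j\<in>UNIV. \<Sum>i\<in>UNIV. \<alpha> $ i * (complex_of_real (J $ i $ j) * complex_of_real (J $ j $ k)))"
    by (simp add: Jt_def sum_distrib_right mult.assoc)
  also have "\<dots> = (\<Sum>i\<in>UNIV. \<alpha> $ i * complex_of_real (\<Sum>j\<in>UNIV. J $ i $ j * J $ j $ k))"
    by (subst sum.swap) (simp add: sum_distrib_left)
  also have "\<dots> = (\<Sum>i\<in>UNIV. if i = k then - \<alpha> $ k else 0)"
    by (rule sum.cong) (auto simp: e)
  also have "\<dots> = - \<alpha> $ k" by simp
  finally show "(Jt J (Jt J \<alpha>)) $ k = (- \<alpha>) $ k" by simp
qed

lemma annih:
  assumes J: "J ** J = - mat 1" and U: "\<forall>\<alpha>\<in>L10 J. ev \<alpha> U = 0"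
  shows "JC J U = - \<i> *s U"
proof -
  have "ev \<alpha> (JC J U + \<i> *s U) = 0" for \<alpha>
  proof -
    define \<beta> where "\<beta> = \<alpha> - \<i> *s Jt J \<alpha>"
    have "Jt J \<beta> = \<i> *s \<beta>"
      by (simp add: \<beta>_def Jt_diff Jt_smult Jt_Jt[OF J] vec_eq_iff algebra_simps)
    then have "ev \<beta> U = 0" using U L10_iff by blast
    have "Jt J \<alpha> + \<i> *s \<alpha> = \<i> *s \<beta>"
      by (simp add: \<beta>_def vec_eq_iff algebra_simps)
    have "ev \<alpha> (JC J U + \<i> *s U) = ev (Jt J \<alpha> + \<i> *s \<alpha>) U"
      by (simp only: ev_add_r ev_add_l ev_smult_r ev_smult_l ev_JC)
    also have "\<dots> = ev (\<i> *s \<beta>) U" by (simp only: \<open>Jt J \<alpha> + \<i> *s \<alpha> = \<i> *s \<beta>\<close>)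
    also have "\<dots> = 0" by (simp only: ev_smult_l \<open>ev \<beta> U = 0\<close> mult_zero_right)
    finally show ?thesis .
  qed
  then have "\<forall>k. (JC J U + \<i> *s U) $ k = 0" by (simp only: ev_axis2[symmetric]) simp
  then show ?thesis by (auto simp: vec_eq_iff eq_neg_iff_add_eq_0)
qed




lemma brk_add_l: "brk (X + Y) Z = brk X Z + brk Y Z"
  by (simp add: vec_eq_iff brk_def de_def wdg_def algebra_simps)
lemma brk_add_r: "brk Z (X + Y) = brk Z X + brk Z Y"
  by (simp add: vec_eq_iff brk_def de_def wdg_def algebra_simps)
lemma brk_smult_l: "brk (c *s X) Z = c *s brk X Z"
  by (simp add: vec_eq_iff brk_def de_def wdg_def algebra_simps)
lemma brk_smult_r: "brk Z (c *s X) = c *s brk Z X"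
  by (simp add: vec_eq_iff brk_def de_def wdg_def algebra_simps)
lemma JC_add: "JC J (X + Y) = JC J X + JC J Y"
  by (simp add: vec_eq_iff JC_def sum.distrib algebra_simps)
lemma JC_smult: "JC J (c *s X) = c *s JC J X"
  by (simp add: vec_eq_iff JC_def sum_distrib_left algebra_simps)
lemma cplx_add: "cplx (X + Y) = cplx X + cplx Y"
  by (simp add: vec_eq_iff cplx_def)
lemma cplx_diff: "cplx (X - Y) = cplx X - cplx Y"
  by (simp add: vec_eq_iff cplx_def)
lemma brk_cplx: "brk (cplx X) (cplx Y) = cplx (brk X Y)"
  by (simp add: vec_eq_iff brk_def de_def wdg_def cplx_def)

definition Nc :: "real^6^6 \<Rightarrow> complex^6 \<Rightarrow> complex^6 \<Rightarrow> complex^6" where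
  "Nc J U V = brk (JC J U) (JC J V) - brk U V - JC J (brk (JC J U) V) - JC J (brk U (JC J V))"

lemma Nc_add_l: "Nc J (U1 + U2) V = Nc J U1 V + Nc J U2 V"
  by (simp add: Nc_def JC_add brk_add_l brk_add_r algebra_simps)
lemma Nc_add_r: "Nc J V (U1 + U2) = Nc J V U1 + Nc J V U2"
  by (simp add: Nc_def JC_add brk_add_l brk_add_r algebra_simps)
lemma Nc_smult_l: "Nc J (c *s U) V = c *s Nc J U V"
  by (simp add: Nc_def JC_smult brk_smult_l brk_smult_r vector_ssub_ldistrib)
lemma Nc_smult_r: "Nc J V (c *s U) = c *s Nc J V U"
  by (simp add: Nc_def JC_smult brk_smult_l brk_smult_r vector_ssub_ldistrib)

lemma Nc_cplx: assumes "J \<in> cstructs" shows "Nc J (cplx X) (cplx Y) = 0"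
proof -
  have "brk (J *v X) (J *v Y) = brk X Y + J *v brk (J *v X) Y + J *v brk X (J *v Y)"
    using assms by (simp add: cstructs_def)
  then have "cplx (brk (J *v X) (J *v Y)) = cplx (brk X Y + J *v brk (J *v X) Y + J *v brk X (J *v Y))"
    by simp
  then show ?thesis
    by (simp add: Nc_def cplx_add cplx_mv[symmetric] brk_cplx)
qed

definition reV :: "complex^6 \<Rightarrow> real^6" where "reV U = (\<chi> i. Re (U $ i))"
definition imV :: "complex^6 \<Rightarrow> real^6" where "imV U = (\<chi> i. Im (U $ i))"
lemma decomp: "U = cplx (reV U) + \<i> *s cplx (imV U)"
  by (simp add: vec_eq_iff cplx_def reV_def imV_def complex_eq_iff)

lemma Nc_zero: assumes "J \<in> cstructs" shows "Nc J U V = 0"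
proof -
  have "Nc J U V = Nc J (cplx (reV U) + \<i> *s cplx (imV U)) (cplx (reV V) + \<i> *s cplx (imV V))"
    using decomp[of U] decomp[of V] by simp
  also have "\<dots> = 0"
    by (simp only: Nc_add_l Nc_add_r Nc_smult_l Nc_smult_r Nc_cplx[OF assms]) simp
  finally show ?thesis .
qed

lemma iaux: "\<i> * (x::complex) = b \<Longrightarrow> x = - (\<i> * b)"
proof -
  assume "\<i> * x = b"
  then have "- (\<i> * b) = - (\<i> * (\<i> * x))" by simp
  also have "\<dots> = x" by (simp add: mult.assoc[symmetric])
  finally show ?thesis by simp
qed

lemma Tbar_closed:
  assumes "J \<in> cstructs" "JC J U = - \<i> *s U" "JC J V = - \<i> *s V"
  shows "JC J (brk U V) = - \<i> *s brk U V"
proof -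
  have n0: "Nc J U V = 0" using Nc_zero[OF assms(1)] .
  have h: "(-\<i>) *s ((-\<i>) *s brk U V) - brk U V - (-\<i>) *s JC J (brk U V) - (-\<i>) *s JC J (brk U V) = 0"
    using n0 by (simp only: Nc_def assms(2,3) brk_smult_l brk_smult_r JC_smult)
  show ?thesis
  proof (subst vec_eq_iff, intro allI)
    fix k
    have "(-\<i>) * ((-\<i>) * brk U V $ k) - brk U V $ k - (-\<i>) * JC J (brk U V) $ k - (-\<i>) * JC J (brk U V) $ k = 0"
      using arg_cong[OF h, of "\<lambda>x. x $ k"] by simp
    then have "2 * \<i> * JC J (brk U V) $ k = 2 * brk U V $ k" by (simp add: algebra_simps)
    then have "\<i> * JC J (brk U V) $ k = brk U V $ k" by simp
    then show "JC J (brk U V) $ k = (- \<i> *s brk U V) $ k" by (simp add: iaux)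
  qed
qed

lemma int_key:
  assumes J: "J \<in> cstructs" and phi: "\<phi> \<in> L10 J"
    and U: "\<forall>\<alpha>\<in>L10 J. ev \<alpha> U = 0" and V: "\<forall>\<alpha>\<in>L10 J. ev \<alpha> V = 0"
  shows "ev \<phi> (brk U V) = 0"
proof -
  have JJ: "J ** J = - mat 1" using J by (simp add: cstructs_def)
  have "JC J (brk U V) = - \<i> *s brk U V"
    using Tbar_closed[OF J annih[OF JJ U] annih[OF JJ V]] .
  then have "ev \<phi> (JC J (brk U V)) = - \<i> * ev \<phi> (brk U V)" by (simp only: ev_smult_r)
  moreover have "ev \<phi> (JC J (brk U V)) = \<i> * ev \<phi> (brk U V)"
    using phi by (simp add: ev_JC L10_iff ev_smult_l)
  ultimately show ?thesis by simp
qed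



lemma conc:
  assumes J: "J' \<in> cstructs"
    and L: "L10 J' = cspan3 (om1 + cvec t1) (cvec om2 + cvec t2) (cvec om3 + cvec t3)"
    and T1: "t1 = A1 *s om1 + B1 *s cvec om2 + C1 *s cvec om3"
    and T2: "t2 = A2 *s om1 + B2 *s cvec om2 + C2 *s cvec om3"
    and T3: "t3 = A3 *s om1 + B3 *s cvec om2 + C3 *s cvec om3"
  shows "C1 = 0"
proof -
  define p1 where "p1 = om1 + cvec t1"
  define p2 where "p2 = cvec om2 + cvec t2"
  define p3 where "p3 = cvec om3 + cvec t3"
  define b1 where "b1 = cnj B1"
  define b2 where "b2 = cnj B2"
  define b3 where "b3 = cnj B3"
  define c1 where "c1 = cnj C1"
  define c2 where "c2 = cnj C2"
  define c3 where "c3 = cnj C3"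
  define U2 :: "complex^6" where "U2 = (\<chi> i. if i = 1 then - b1 else if i = 2 then \<i> * b1 else if i = 3 then 1 - b2
      else if i = 4 then - \<i> - \<i> * b2 else if i = 5 then - b3 else - \<i> * b3)"
  define U3 :: "complex^6" where "U3 = (\<chi> i. if i = 1 then - c1 else if i = 2 then \<i> * c1 else if i = 3 then - c2
      else if i = 4 then - \<i> * c2 else if i = 5 then 1 - c3 else - \<i> - \<i> * c3)"
  have p1c: "p1 $ 1 = 1 + cnj A1" "p1 $ 2 = \<i> - \<i> * cnj A1" "p1 $ 3 = b1" "p1 $ 4 = \<i> * b1" "p1 $ 5 = c1" "p1 $ 6 = \<i> * c1"
    by (simp_all add: p1_def T1 b1_def c1_def cvec_def om1_def om2_def om3_def)
  have p2c: "p2 $ 1 = cnj A2" "p2 $ 2 = - \<i> * cnj A2" "p2 $ 3 = 1 + b2" "p2 $ 4 = - \<i> + \<i> * b2" "p2 $ 5 = c2" "p2 $ 6 = \<i> * c2"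
    by (simp_all add: p2_def T2 b2_def c2_def cvec_def om1_def om2_def om3_def)
  have p3c: "p3 $ 1 = cnj A3" "p3 $ 2 = - \<i> * cnj A3" "p3 $ 3 = b3" "p3 $ 4 = \<i> * b3" "p3 $ 5 = 1 + c3" "p3 $ 6 = - \<i> + \<i> * c3"
    by (simp_all add: p3_def T3 b3_def c3_def cvec_def om1_def om2_def om3_def)
  have U2c: "U2 $ 1 = - b1" "U2 $ 2 = \<i> * b1" "U2 $ 3 = 1 - b2" "U2 $ 4 = - \<i> - \<i> * b2" "U2 $ 5 = - b3" "U2 $ 6 = - \<i> * b3"
    by (simp_all add: U2_def)
  have U3c: "U3 $ 1 = - c1" "U3 $ 2 = \<i> * c1" "U3 $ 3 = - c2" "U3 $ 4 = - \<i> * c2" "U3 $ 5 = 1 - c3" "U3 $ 6 = - \<i> - \<i> * c3"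
    by (simp_all add: U3_def)
  have z: "ev p1 U2 = 0" "ev p2 U2 = 0" "ev p3 U2 = 0" "ev p1 U3 = 0" "ev p2 U3 = 0" "ev p3 U3 = 0"
    by (simp_all add: ev_def sum6 p1c p2c p3c U2c U3c algebra_simps)
  have LL: "L10 J' = cspan3 p1 p2 p3" using L by (simp add: p1_def p2_def p3_def)
  have annU2: "\<forall>\<alpha>\<in>L10 J'. ev \<alpha> U2 = 0"
    using z by (auto simp: LL cspan3_def ev_add_l ev_smult_l)
  have annU3: "\<forall>\<alpha>\<in>L10 J'. ev \<alpha> U3 = 0"
    using z by (auto simp: LL cspan3_def ev_add_l ev_smult_l)
  have "p1 \<in> L10 J'" unfolding LL cspan3_def
    by (rule CollectI, rule exI[of _ 1], rule exI[of _ 0], rule exI[of _ 0]) simp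
  then have "ev p1 (brk U2 U3) = 0" using int_key[OF J _ annU2 annU3] by simp
  moreover have "ev p1 (brk U2 U3) = - 4 * c1 ^ 2"
    by (simp add: ev_def sum6 brk_def de_def wdg_def p1c U2c U3c algebra_simps power2_eq_square)
  ultimately have "c1 = 0" by simp
  then show ?thesis by (simp add: c1_def)
qed



lemma ev_zero_l: "ev 0 X = 0" by (simp add: ev_def)

lemma ev_P01: "ev \<beta> (P01 J Z) = (1/2) * (ev \<beta> Z + \<i> * ev (Jt J \<beta>) Z)"
  by (simp add: P01_def ev_smult_r ev_add_r ev_JC)
lemma ev_P10: "ev \<beta> (P10 J Z) = (1/2) * (ev \<beta> Z - \<i> * ev (Jt J \<beta>) Z)"
  by (simp add: P10_def ev_smult_r ev_diff_r ev_JC)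

lemma ev_trans: "ev \<alpha> (transpose Th *v X) = ev (Th *v \<alpha>) X"
proof -
  have "ev \<alpha> (transpose Th *v X) = (\<Sum>i\<in>UNIV. \<Sum>j\<in>UNIV. \<alpha> $ i * Th $ j $ i * X $ j)"
    by (simp add: ev_def matrix_vector_mult_def transpose_def sum_distrib_left mult.assoc)
  also have "\<dots> = (\<Sum>j\<in>UNIV. \<Sum>i\<in>UNIV. \<alpha> $ i * Th $ j $ i * X $ j)"
    by (rule sum.swap)
  also have "\<dots> = (\<Sum>j\<in>UNIV. \<Sum>i\<in>UNIV. (Th $ j $ i * \<alpha> $ i) * X $ j)"
    by (intro sum.cong refl) (simp add: ac_simps)
  also have "\<dots> = ev (Th *v \<alpha>) X"
    by (simp add: ev_def matrix_vector_mult_def sum_distrib_right)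
  finally show ?thesis .
qed

lemma ev_vm: "ev \<alpha> (X v* Th) = ev (Th *v \<alpha>) X"
  using ev_trans[of \<alpha> Th X] by simp
lemma ev_neg_l: "ev (- \<alpha>) X = - ev \<alpha> X"
  by (simp add: ev_def sum_negf)

lemma mv_add: "(A::complex^6^6) *v (x + y) = A *v x + A *v y"
  by (simp add: vec_eq_iff matrix_vector_mult_def sum.distrib algebra_simps)
lemma mv_smult: "(A::complex^6^6) *v (c *s x) = c *s (A *v x)"
  by (simp add: vec_eq_iff matrix_vector_mult_def sum_distrib_left algebra_simps)

lemma mv_neg: "(A::complex^6^6) *v (- x) = - (A *v x)"
  by (simp add: vec_eq_iff matrix_vector_mult_def sum_negf)

lemma d1_eta: "d1 (A *s om1 + B *s cvec om2 + C *s cvec om3) Z W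
   = C * (ev (cvec om1) Z * ev (cvec om2) W - ev (cvec om1) W * ev (cvec om2) Z)"
  by (simp add: d1_def ev_def sum6 brk_def de_def wdg_def om1_def om2_def om3_def cvec_def algebra_simps)

lemma d1_om3: "d1 (A *s om3) Z W = A * (ev om1 Z * ev om2 W - ev om1 W * ev om2 Z)"
  by (simp add: d1_def ev_def sum6 brk_def de_def wdg_def om1_def om2_def om3_def algebra_simps)

lemma part1:
  assumes L: "L10 J1 = cspan3 om1 (cvec om2) (cvec om3)"
    and T1: "Th *v om1 = om3" and T2: "Th *v cvec om2 = 0" and T3: "Th *v cvec om3 = 0"
    and T4: "Th *v cvec om1 = 0"
    and eta: "\<eta> \<in> L10 J1"
  shows "dbar_theta J1 Th \<eta> X Y = 0"
proof -
  obtain A B C where e: "\<eta> = A *s om1 + B *s cvec om2 + C *s cvec om3"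
    using eta L by (auto simp: cspan3_def)
  have m1: "om1 \<in> L10 J1" unfolding L cspan3_def
    by (rule CollectI, rule exI[of _ 1], rule exI[of _ 0], rule exI[of _ 0]) simp
  have m2: "cvec om2 \<in> L10 J1" unfolding L cspan3_def
    by (rule CollectI, rule exI[of _ 0], rule exI[of _ 1], rule exI[of _ 0]) simp
  have j1: "Jt J1 om1 = \<i> *s om1" using m1 L10_iff by blast
  have j2: "Jt J1 (cvec om2) = \<i> *s cvec om2" using m2 L10_iff by blast
  have j3: "Jt J1 (cvec om1) = - \<i> *s cvec om1" by (simp add: Jt_cvec j1 cvec_smult)
  have the: "Th *v \<eta> = A *s om3"
    by (simp add: e mv_add mv_smult T1 T2 T3)
  show ?thesis
    unfolding dbar_theta_def comp02_def theta2_def comp11_def the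
    unfolding e d1_eta d1_om3
    by (simp add: ev_P01 ev_P10 ev_trans ev_vm T2 T4 ev_zero_l ev_neg_l mv_smult mv_neg j1 j2 j3 ev_smult_l algebra_simps)
qed



lemma part2:
  assumes L: "L10 J1 = cspan3 om1 (cvec om2) (cvec om3)"
    and T1: "Th *v om1 = om3"
  shows "\<not> tangent_at J1 om1 (cvec om2) (cvec om3) Th"
proof
  assume "tangent_at J1 om1 (cvec om2) (cvec om3) Th"
  then obtain \<epsilon> :: real and \<tau>1 \<tau>2 \<tau>3 :: "real \<Rightarrow> complex^6" and \<sigma>1 \<sigma>2 \<sigma>3 where
    ep: "\<epsilon> > 0" and
    inL: "\<forall>t\<in>{-\<epsilon><..<\<epsilon>}. \<tau>1 t \<in> L10 J1 \<and> \<tau>2 t \<in> L10 J1 \<and> \<tau>3 t \<in> L10 J1" and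
    d1: "(\<tau>1 has_vector_derivative \<sigma>1) (at 0)" and
    s1: "cvec \<sigma>1 = Th *v om1" and
    JJ: "\<forall>t\<in>{-\<epsilon><..<\<epsilon>}. \<exists>J'\<in>cstructs.
          L10 J' = cspan3 (om1 + cvec (\<tau>1 t)) (cvec om2 + cvec (\<tau>2 t)) (cvec om3 + cvec (\<tau>3 t))"
    unfolding tangent_at_def by blast
  have z: "\<tau>1 t $ 5 = 0" if t: "t \<in> {-\<epsilon><..<\<epsilon>}" for t
  proof -
    have m: "\<tau>1 t \<in> cspan3 om1 (cvec om2) (cvec om3)" "\<tau>2 t \<in> cspan3 om1 (cvec om2) (cvec om3)"
        "\<tau>3 t \<in> cspan3 om1 (cvec om2) (cvec om3)" using inL t L by auto
    obtain A1 B1 C1 where e1: "\<tau>1 t = A1 *s om1 + B1 *s cvec om2 + C1 *s cvec om3"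
      using m by (auto simp: cspan3_def)
    obtain A2 B2 C2 where e2: "\<tau>2 t = A2 *s om1 + B2 *s cvec om2 + C2 *s cvec om3"
      using m by (auto simp: cspan3_def)
    obtain A3 B3 C3 where e3: "\<tau>3 t = A3 *s om1 + B3 *s cvec om2 + C3 *s cvec om3"
      using m by (auto simp: cspan3_def)
    obtain J' where J': "J' \<in> cstructs"
      "L10 J' = cspan3 (om1 + cvec (\<tau>1 t)) (cvec om2 + cvec (\<tau>2 t)) (cvec om3 + cvec (\<tau>3 t))"
      using JJ t by blast
    have "C1 = 0" by (rule conc[OF J'(1) J'(2) e1 e2 e3])
    then show ?thesis by (simp add: e1 om1_def om2_def om3_def cvec_def)
  qed
  have dc: "((\<lambda>t. \<tau>1 t $ 5) has_vector_derivative \<sigma>1 $ 5) (at 0)"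
    using bounded_linear.has_vector_derivative[OF bounded_linear_vec_nth d1] .
  have "((\<lambda>t. 0 :: complex) has_vector_derivative \<sigma>1 $ 5) (at 0)"
    by (rule has_vector_derivative_transform_within_open[OF dc, of "{-\<epsilon><..<\<epsilon>}"])
       (use ep z in auto)
  moreover have "((\<lambda>t. 0 :: complex) has_vector_derivative 0) (at 0)"
    by (rule has_vector_derivative_const)
  ultimately have "\<sigma>1 $ 5 = 0" by (rule vector_derivative_unique_at)
  moreover have "cnj (\<sigma>1 $ 5) = 1"
  proof -
    have "(cvec \<sigma>1) $ 5 = om3 $ 5" using s1 T1 by simp
    then show ?thesis by (simp add: cvec_def om3_def)
  qed
  ultimately show False by simp
qed

theorem lemma4p3:
  fixes J1 :: "real ^ 6 ^ 6" and Th :: "complex ^ 6 ^ 6"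
  assumes "J1 \<in> cstructs"
    and "L10 J1 = cspan3 om1 (cvec om2) (cvec om3)"
    and "Th *v om1 = om3" and "Th *v cvec om2 = 0" and "Th *v cvec om3 = 0"
    and "Th *v cvec om1 = 0" and "Th *v om2 = 0" and "Th *v om3 = 0"
  shows "(\<forall>\<eta>\<in>L10 J1. \<forall>X Y. dbar_theta J1 Th \<eta> X Y = 0)
         \<and> \<not> tangent_at J1 om1 (cvec om2) (cvec om3) Th"
  using part1[OF assms(2,3,4,5,6)] part2[OF assms(2,3)] by blast


end
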